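(* Let $\Lambda$ be an ordinal with $2\leq\Lambda\leq\omega$. Then there is a family $\langle a(n,v,i): n\in\omega,\ v\in{}^{2n}\omega,\ i\in\Lambda\cap(n+1)\rangle$ such that (a1) $a(n,v,i)\in{}^{n}\omega$ for all $n\in\omega$, $v\in{}^{2n}\omega$, $i\in\Lambda\cap(n+1)$; (a2) for all $n\in\omega$, $v\in{}^{2n}\omega$ and $m\in\omega$, $$\Big(\big(\prod_{i\in\Lambda\cap(n+1)}\widetilde{\mathbf{S}}^{m}_{a(n,v,i)}\big)\setminus\big(\prod_{i\in\Lambda\cap(n+1)}\widetilde{\mathbf{S}}^{m+1}_{a(n,v,i)}\big)\Big)\cdot{}^{\Lambda\cap\{n+1\}}({}^{\omega}\omega)$$ is the union of the pairwise disjoint sets $\prod_{i\in\Lambda\cap(n+2)}\mathbf{S}_{a(n+1,v^\frown\langle m,l\rangle,i)}$, $l\in\omega$.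
   Context: Ordinals are von Neumann ordinals: $n=\{0,\dots,n-1\}$, $\omega=\{0,1,2,\dots\}$. ${}^{B}A$ is the set of all functions from $B$ to $A$ (so ${}^{\varnothing}A=\{\varnothing\}$); ${}^{n}\omega$ is the set of sequences of natural numbers of length $n$; $v^\frown\langle m,l\rangle$ is the sequence $v$ extended by the two terms $m,l$. For $x\in{}^{<\omega}\omega$, $\mathbf{S}_x=\{p\in{}^{\omega}\omega: x\subseteq p\}$ (infinite sequences extending $x$), and for $m\in\omega$, $\widetilde{\mathbf{S}}^{m}_{x}=\bigcup\{\mathbf{S}_{x^\frown\langle l\rangle}: l\in\omega\setminus m\}$. For an index set $I$, $\prod_{i\in I}D_i$ is the set of functions $p$ with domain $I$ and $p(i)\in D_i$ for all $i\in I$. For sets of functions $E\subseteq{}^{A}C$, $F\subseteq{}^{B}C$ with $A\cap B=\varnothing$, $E\cdot F=\{e\cup f: e\in E,\ f\in F\}$, i.e. the set of $p\in{}^{A\cup B}C$ with $p\restriction A\in E$ and $p\restriction B\in F$. *)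

theory Defs
  imports Main "HOL-Library.FuncSet" "HOL-Library.Extended_Nat" "HOL-Library.Disjoint_Sets"
begin

text \<open>Finite sequences of naturals are lists; infinite sequences are functions nat => nat.\<close>

definition Sbase :: "nat list \<Rightarrow> (nat \<Rightarrow> nat) set" where
  "Sbase x = {p. \<forall>k < length x. p k = x ! k}"

definition Stilde :: "nat \<Rightarrow> nat list \<Rightarrow> (nat \<Rightarrow> nat) set" where
  "Stilde m x = (\<Union>l \<in> {m..}. Sbase (x @ [l]))"

text \<open>Lambda (2 <= Lambda <= omega) is an extended natural; Lambda \<inter> (n+1) and Lambda \<inter> {n+1}.\<close>
definition Idx :: "enat \<Rightarrow> nat \<Rightarrow> nat set" where
  "Idx L n = {i. enat i < L \<and> i \<le> n}"

definition Idx1 :: "enat \<Rightarrow> nat \<Rightarrow> nat set" where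
  "Idx1 L n = {i. enat i < L \<and> i = n + 1}"

text \<open>E \<cdot> F for E over domain A, F over domain B (A, B disjoint): functions on A \<union> B
  whose restrictions lie in E and F respectively (extensional convention of FuncSet).\<close>
definition dotp :: "('a \<Rightarrow> 'b) set \<Rightarrow> 'a set \<Rightarrow> ('a \<Rightarrow> 'b) set \<Rightarrow> 'a set \<Rightarrow> ('a \<Rightarrow> 'b) set" where
  "dotp E A F B = {p. p \<in> extensional (A \<union> B) \<and> restrict p A \<in> E \<and> restrict p B \<in> F}"

end

theory Submission
  imports Defs "HOL-Library.Countable_Set" "HOL-Library.Countable" "HOL-Library.Infinite_Set"
begin

definition DD :: "enat \<Rightarrow> nat \<Rightarrow> nat \<Rightarrow> (nat list \<times> nat list) set" where
  "DD L n m = {(ts, s). length ts = n + 1 \<and>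
     (\<forall>i\<le>n. (i \<in> Idx L n \<longrightarrow> m \<le> ts ! i) \<and> (i \<notin> Idx L n \<longrightarrow> ts ! i = 0)) \<and>
     (\<exists>i\<in>Idx L n. ts ! i = m) \<and>
     length s = (if enat (n + 1) < L then n + 1 else 0)}"

fun AA :: "enat \<Rightarrow> nat \<Rightarrow> nat list \<Rightarrow> nat \<Rightarrow> nat list" where
  "AA L 0 v i = []"
| "AA L (Suc n) v i =
     (let w = take (2 * n) v; m = v ! (2 * n); l = v ! (2 * n + 1);
          d = from_nat_into (DD L n m) l
      in if i \<le> n then AA L n w i @ [fst d ! i] else snd d)"

lemma Idx0: "2 \<le> L \<Longrightarrow> 0 \<in> Idx L n"
proof -
  assume a: "2 \<le> L"
  have "(0::enat) < 2" by simp
  then have "(0::enat) < L" using a by (rule less_le_trans)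
  then show ?thesis unfolding Idx_def by (simp add: zero_enat_def)
qed

lemma DD_ne: assumes "2 \<le> L" shows "DD L n m \<noteq> {}"
proof -
  let ?ts = "map (\<lambda>i. if i \<in> Idx L n then m else 0) [0..<n+1]"
  let ?s = "replicate (if enat (n + 1) < L then n + 1 else 0) (0::nat)"
  have "(?ts, ?s) \<in> DD L n m"
    unfolding DD_def using Idx0[OF assms, of n]
    by (auto simp del: upt_Suc intro!: bexI[of _ 0])
  then show ?thesis by blast
qed

lemma DD_inf: assumes "2 \<le> L" shows "infinite (DD L n m)"
proof (cases "enat (n + 1) < L")
  case True
  let ?ts = "map (\<lambda>i. if i \<in> Idx L n then m else 0) [0..<n+1]"
  define f where "f = (\<lambda>k::nat. (?ts, k # replicate n (0::nat)))"
  have "inj f" unfolding f_def by (auto intro: injI)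
  moreover have "range f \<subseteq> DD L n m"
    unfolding DD_def f_def using Idx0[OF assms, of n] True
    by (auto simp del: upt_Suc intro!: bexI[of _ 0])
  ultimately show ?thesis using range_inj_infinite infinite_super by blast
next
  case False
  have "(1::enat) < 2" by simp
  then have L1: "enat 1 < L" using assms unfolding one_enat_def by (rule less_le_trans)
  have n1: "n \<ge> 1"
  proof (rule ccontr)
    assume "\<not> n \<ge> 1" then have "n = 0" by simp
    with False L1 show False by simp
  qed
  have one: "1 \<in> Idx L n" unfolding Idx_def using L1 n1 by simp
  define f where "f = (\<lambda>k::nat. (map (\<lambda>i. if i = 0 then m else if i \<in> Idx L n then m + k else 0) [0..<n+1], []::nat list))"
  have "inj f"
  proof (rule injI)
    fix x y assume "f x = f y"
    then have "fst (f x) ! 1 = fst (f y) ! 1" by simp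
    then show "x = y" unfolding f_def using one n1 by (simp del: upt_Suc)
  qed
  moreover have "range f \<subseteq> DD L n m"
    unfolding DD_def f_def using Idx0[OF assms, of n] False
    by (auto simp del: upt_Suc intro!: bexI[of _ 0])
  ultimately show ?thesis using range_inj_infinite infinite_super by blast
qed

lemma DD_bij: "2 \<le> L \<Longrightarrow> bij_betw (from_nat_into (DD L n m)) UNIV (DD L n m)"
  by (rule bij_betw_from_nat_into) (auto intro: countableI_type simp: DD_inf)

lemma Sbase_snoc: "p \<in> Sbase (x @ [l]) \<longleftrightarrow> p \<in> Sbase x \<and> p (length x) = l"
  unfolding Sbase_def
  by (auto simp: nth_append less_Suc_eq)

lemma Stilde_iff: "p \<in> Stilde m x \<longleftrightarrow> p \<in> Sbase x \<and> m \<le> p (length x)"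
  unfolding Stilde_def by (auto simp: Sbase_snoc)

lemma AA_len: "2 \<le> L \<Longrightarrow> length v = 2 * n \<Longrightarrow> i \<in> Idx L n \<Longrightarrow> length (AA L n v i) = n"
proof (induction n arbitrary: v i)
  case 0 then show ?case by simp
next
  case (Suc n)
  show ?case
  proof (cases "i \<le> n")
    case True
    then have "i \<in> Idx L n" using Suc.prems(3) unfolding Idx_def by auto
    then show ?thesis using True Suc.IH[of "take (2*n) v" i] Suc.prems by (simp add: Let_def)
  next
    case False
    then have i: "i = Suc n" using Suc.prems(3) unfolding Idx_def by auto
    then have lt: "enat (n+1) < L" using Suc.prems(3) unfolding Idx_def by auto
    have "from_nat_into (DD L n (v ! (2*n))) (v ! (2*n+1)) \<in> DD L n (v ! (2*n))"
      by (rule from_nat_into) (rule DD_ne[OF Suc.prems(1)])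
    then have "length (snd (from_nat_into (DD L n (v ! (2*n))) (v ! (2*n+1)))) = n + 1"
      using lt unfolding DD_def by auto
    then show ?thesis using i by (simp add: Let_def)
  qed
qed

lemma AA_step: "length v = 2 * n \<Longrightarrow> AA L (Suc n) (v @ [m, l]) i =
   (if i \<le> n then AA L n v i @ [fst (from_nat_into (DD L n m) l) ! i]
    else snd (from_nat_into (DD L n m) l))"
  by (simp add: Let_def nth_append)

lemma Idx_Suc: "Idx L (Suc n) = Idx L n \<union> Idx1 L n"
  unfolding Idx_def Idx1_def by auto

lemma Idx_le: "i \<in> Idx L n \<Longrightarrow> i \<le> n" unfolding Idx_def by auto

lemma dotp_iff:
  assumes L: "2 \<le> L" and v: "length v = 2 * n"
  shows "p \<in> dotp ((\<Pi>\<^sub>E i \<in> Idx L n. Stilde m (AA L n v i)) - (\<Pi>\<^sub>E i \<in> Idx L n. Stilde (m + 1) (AA L n v i)))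
            (Idx L n) (\<Pi>\<^sub>E i \<in> Idx1 L n. UNIV) (Idx1 L n) \<longleftrightarrow>
    p \<in> extensional (Idx L (Suc n)) \<and> (\<forall>i\<in>Idx L n. p i \<in> Sbase (AA L n v i) \<and> m \<le> p i n) \<and>
    (\<exists>i\<in>Idx L n. p i n = m)"
proof -
  have len: "\<And>i. i \<in> Idx L n \<Longrightarrow> length (AA L n v i) = n" using AA_len[OF L v] .
  have A: "\<And>k. restrict p (Idx L n) \<in> (\<Pi>\<^sub>E i \<in> Idx L n. Stilde k (AA L n v i)) \<longleftrightarrow>
      (\<forall>i\<in>Idx L n. p i \<in> Sbase (AA L n v i) \<and> k \<le> p i n)"
    by (simp add: restrict_PiE_iff Pi_iff Stilde_iff len)
  have C: "restrict p (Idx1 L n) \<in> (\<Pi>\<^sub>E i \<in> Idx1 L n. UNIV)" by simp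
  have ar: "\<And>x::nat. m \<le> x \<Longrightarrow> (\<not> m + 1 \<le> x \<longleftrightarrow> x = m)" by arith
  have D: "p \<in> dotp ((\<Pi>\<^sub>E i \<in> Idx L n. Stilde m (AA L n v i)) - (\<Pi>\<^sub>E i \<in> Idx L n. Stilde (m + 1) (AA L n v i)))
            (Idx L n) (\<Pi>\<^sub>E i \<in> Idx1 L n. UNIV) (Idx1 L n) \<longleftrightarrow>
     p \<in> extensional (Idx L (Suc n)) \<and> (\<forall>i\<in>Idx L n. p i \<in> Sbase (AA L n v i) \<and> m \<le> p i n) \<and>
     \<not> (\<forall>i\<in>Idx L n. p i \<in> Sbase (AA L n v i) \<and> m + 1 \<le> p i n)"
    unfolding dotp_def Idx_Suc Diff_iff mem_Collect_eq A using C by simp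
  show ?thesis unfolding D
  proof (intro iffI conjI)
    assume h: "p \<in> extensional (Idx L (Suc n)) \<and> (\<forall>i\<in>Idx L n. p i \<in> Sbase (AA L n v i) \<and> m \<le> p i n) \<and>
     \<not> (\<forall>i\<in>Idx L n. p i \<in> Sbase (AA L n v i) \<and> m + 1 \<le> p i n)"
    then show "p \<in> extensional (Idx L (Suc n))" "\<forall>i\<in>Idx L n. p i \<in> Sbase (AA L n v i) \<and> m \<le> p i n"
      by blast+
    from h obtain i where i: "i \<in> Idx L n" "\<not> (p i \<in> Sbase (AA L n v i) \<and> m + 1 \<le> p i n)" by blast
    with h have "p i \<in> Sbase (AA L n v i)" "m \<le> p i n" by blast+
    with i ar show "\<exists>i\<in>Idx L n. p i n = m" by blast
  next
    assume h: "p \<in> extensional (Idx L (Suc n)) \<and> (\<forall>i\<in>Idx L n. p i \<in> Sbase (AA L n v i) \<and> m \<le> p i n) \<and>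
      (\<exists>i\<in>Idx L n. p i n = m)"
    then show "p \<in> extensional (Idx L (Suc n))" "\<forall>i\<in>Idx L n. p i \<in> Sbase (AA L n v i) \<and> m \<le> p i n"
      by blast+
    from h obtain i where "i \<in> Idx L n" "p i n = m" by blast
    then show "\<not> (\<forall>i\<in>Idx L n. p i \<in> Sbase (AA L n v i) \<and> m + 1 \<le> p i n)" by force
  qed
qed

lemma box_eq:
  assumes L: "2 \<le> L" and v: "length (v::nat list) = 2 * n"
    and d: "d \<in> DD L n m" and d': "d' \<in> DD L n m"
    and p: "p \<in> (\<Pi>\<^sub>E i \<in> Idx L (n + 1). Sbase (if i \<le> n then AA L n v i @ [fst d ! i] else snd d))"
    and p': "p \<in> (\<Pi>\<^sub>E i \<in> Idx L (n + 1). Sbase (if i \<le> n then AA L n v i @ [fst d' ! i] else snd d'))"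
  shows "d = d'"
proof -
  obtain ts s where ds: "d = (ts, s)" by force
  obtain ts' s' where ds': "d' = (ts', s')" by force
  have len: "\<And>i. i \<in> Idx L n \<Longrightarrow> length (AA L n v i) = n" using AA_len[OF L v] .
  have "ts = ts'"
  proof (rule nth_equalityI)
    show "length ts = length ts'" using d d' ds ds' unfolding DD_def by auto
    fix i assume "i < length ts"
    then have i: "i \<le> n" using d ds unfolding DD_def by auto
    show "ts ! i = ts' ! i"
    proof (cases "i \<in> Idx L n")
      case True
      then have "i \<in> Idx L (n+1)" unfolding Idx_def by auto
      then have "p i \<in> Sbase (AA L n v i @ [ts ! i])" "p i \<in> Sbase (AA L n v i @ [ts' ! i])"
        using p p' i ds ds' by (auto simp: PiE_iff)
      then show ?thesis by (simp add: Sbase_snoc)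
    next
      case False then show ?thesis using d d' ds ds' i unfolding DD_def by auto
    qed
  qed
  moreover have "s = s'"
  proof (cases "enat (n+1) < L")
    case True
    then have "n+1 \<in> Idx L (n+1)" unfolding Idx_def by auto
    then have "p (n+1) \<in> Sbase s" "p (n+1) \<in> Sbase s'" using p p' ds ds' by (auto simp: PiE_iff)
    moreover have "length s = n+1" "length s' = n+1" using d d' ds ds' True unfolding DD_def by auto
    ultimately show ?thesis unfolding Sbase_def by (auto intro: nth_equalityI)
  next
    case False then show ?thesis using d d' ds ds' unfolding DD_def by auto
  qed
  ultimately show ?thesis using ds ds' by simp
qed

theorem lemma11:
  fixes L :: enat
  assumes "2 \<le> L"
  shows "\<exists>a :: nat \<Rightarrow> nat list \<Rightarrow> nat \<Rightarrow> nat list.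
    (\<forall>n v i. length v = 2 * n \<and> i \<in> Idx L n \<longrightarrow> length (a n v i) = n) \<and>
    (\<forall>n v m. length v = 2 * n \<longrightarrow>
       dotp ((\<Pi>\<^sub>E i \<in> Idx L n. Stilde m (a n v i)) - (\<Pi>\<^sub>E i \<in> Idx L n. Stilde (m + 1) (a n v i)))
            (Idx L n) (\<Pi>\<^sub>E i \<in> Idx1 L n. UNIV) (Idx1 L n)
         = (\<Union>l. \<Pi>\<^sub>E i \<in> Idx L (n + 1). Sbase (a (n + 1) (v @ [m, l]) i))
       \<and> disjoint_family (\<lambda>l. \<Pi>\<^sub>E i \<in> Idx L (n + 1). Sbase (a (n + 1) (v @ [m, l]) i)))"
proof (intro exI[of _ "AA L"] conjI allI impI)
  fix n i and v :: "nat list" assume "length v = 2 * n \<and> i \<in> Idx L n"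
  then show "length (AA L n v i) = n" using AA_len[OF assms] by blast
next
  fix n m and v :: "nat list" assume v: "length v = 2 * n"
  define g where "g = from_nat_into (DD L n m)"
  have bij: "bij_betw g UNIV (DD L n m)" unfolding g_def by (rule DD_bij[OF assms])
  define Box where "Box d = (\<Pi>\<^sub>E i \<in> Idx L (n + 1). Sbase (if i \<le> n then AA L n v i @ [fst d ! i] else snd d))" for d
  have fam: "(\<lambda>l. \<Pi>\<^sub>E i \<in> Idx L (n + 1). Sbase (AA L (n + 1) (v @ [m, l]) i)) = (\<lambda>l. Box (g l))"
    unfolding Box_def g_def using AA_step[OF v] by simp
  have len: "\<And>i. i \<in> Idx L n \<Longrightarrow> length (AA L n v i) = n" using AA_len[OF assms v] .
  show "disjoint_family (\<lambda>l. \<Pi>\<^sub>E i \<in> Idx L (n + 1). Sbase (AA L (n + 1) (v @ [m, l]) i))"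
    unfolding fam disjoint_family_on_def
  proof (intro ballI impI)
    fix l l' :: nat assume ne: "l \<noteq> l'"
    show "Box (g l) \<inter> Box (g l') = {}"
    proof (rule ccontr)
      assume "Box (g l) \<inter> Box (g l') \<noteq> {}"
      then obtain p where "p \<in> Box (g l)" "p \<in> Box (g l')" by blast
      moreover have "g l \<in> DD L n m" "g l' \<in> DD L n m"
        using bij unfolding bij_betw_def by auto
      ultimately have "g l = g l'" by (intro box_eq[OF assms v, of "g l" m "g l'" p]) (simp_all add: Box_def)
      then show False using ne bij unfolding bij_betw_def inj_def by auto
    qed
  qed
  show "dotp ((\<Pi>\<^sub>E i \<in> Idx L n. Stilde m (AA L n v i)) - (\<Pi>\<^sub>E i \<in> Idx L n. Stilde (m + 1) (AA L n v i)))
            (Idx L n) (\<Pi>\<^sub>E i \<in> Idx1 L n. UNIV) (Idx1 L n)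
         = (\<Union>l. \<Pi>\<^sub>E i \<in> Idx L (n + 1). Sbase (AA L (n + 1) (v @ [m, l]) i))"
    unfolding fam
  proof (intro equalityI subsetI)
    fix p assume "p \<in> dotp ((\<Pi>\<^sub>E i \<in> Idx L n. Stilde m (AA L n v i)) - (\<Pi>\<^sub>E i \<in> Idx L n. Stilde (m + 1) (AA L n v i)))
            (Idx L n) (\<Pi>\<^sub>E i \<in> Idx1 L n. UNIV) (Idx1 L n)"
    then have ext: "p \<in> extensional (Idx L (Suc n))"
      and base: "\<forall>i\<in>Idx L n. p i \<in> Sbase (AA L n v i) \<and> m \<le> p i n"
      and ex: "\<exists>i\<in>Idx L n. p i n = m"
      using dotp_iff[OF assms v, THEN iffD1] by auto
    define ts where "ts = map (\<lambda>i. if i \<in> Idx L n then p i n else 0) [0..<n+1]"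
    define s where "s = (if enat (n+1) < L then map (p (n+1)) [0..<n+1] else [])"
    have tsi: "ts ! i = (if i \<in> Idx L n then p i n else 0)" if "i \<le> n" for i
      using that unfolding ts_def by (simp del: upt_Suc add: nth_upt)
    have l1: "length ts = n + 1" "length s = (if enat (n + 1) < L then n + 1 else 0)"
      unfolding ts_def s_def by auto
    have l2: "\<forall>i\<le>n. (i \<in> Idx L n \<longrightarrow> m \<le> ts ! i) \<and> (i \<notin> Idx L n \<longrightarrow> ts ! i = 0)"
      using tsi base by auto
    have l3: "\<exists>i\<in>Idx L n. ts ! i = m"
      using ex tsi Idx_le by force
    have "(ts, s) \<in> DD L n m"
      unfolding DD_def using l1 l2 l3 by blast
    then obtain l where gl: "g l = (ts, s)" using bij unfolding bij_betw_def by (metis imageE UNIV_I)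
    have "p \<in> Box (ts, s)"
      unfolding Box_def PiE_iff
    proof (intro conjI ballI)
      show "p \<in> extensional (Idx L (n + 1))" using ext by simp
      fix i assume i: "i \<in> Idx L (n + 1)"
      show "p i \<in> Sbase (if i \<le> n then AA L n v i @ [fst (ts, s) ! i] else snd (ts, s))"
      proof (cases "i \<le> n")
        case True
        then have ii: "i \<in> Idx L n" using i unfolding Idx_def by auto
        have "ts ! i = p i n" unfolding ts_def using True ii by (simp del: upt_Suc add: nth_map_upt)
        then show ?thesis using True ii base len[OF ii] by (simp add: Sbase_snoc)
      next
        case False
        then have e: "i = n+1" using i unfolding Idx_def by auto
        then have "enat (n+1) < L" using i unfolding Idx_def by auto
        with e show ?thesis using False unfolding s_def Sbase_def by (simp del: upt_Suc)
      qed
    qed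
    then show "p \<in> (\<Union>l. Box (g l))" using gl by (intro UN_I[of l]) auto
  next
    fix p assume "p \<in> (\<Union>l. Box (g l))"
    then obtain l where p: "p \<in> Box (g l)" by blast
    obtain ts s where gl: "g l = (ts, s)" by force
    have d: "(ts, s) \<in> DD L n m" using bij gl unfolding bij_betw_def by (metis rangeI)
    have pi: "\<And>i. i \<in> Idx L n \<Longrightarrow> p i \<in> Sbase (AA L n v i @ [ts ! i])"
    proof -
      fix i assume ii: "i \<in> Idx L n"
      then have "i \<in> Idx L (n+1)" "i \<le> n" unfolding Idx_def by auto
      then show "p i \<in> Sbase (AA L n v i @ [ts ! i])" using p gl unfolding Box_def by (auto simp: PiE_iff)
    qed
    have ext2: "p \<in> extensional (Idx L (Suc n))" using p unfolding Box_def PiE_def by simp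
    have dd: "\<forall>i\<le>n. (i \<in> Idx L n \<longrightarrow> m \<le> ts ! i)" "\<exists>i\<in>Idx L n. ts ! i = m"
      using d unfolding DD_def by auto
    have pi2: "p i \<in> Sbase (AA L n v i) \<and> p i n = ts ! i" if "i \<in> Idx L n" for i
      using pi[OF that] len[OF that] Sbase_snoc by metis
    have b2: "\<forall>i\<in>Idx L n. p i \<in> Sbase (AA L n v i) \<and> m \<le> p i n"
    proof
      fix i assume i: "i \<in> Idx L n"
      then show "p i \<in> Sbase (AA L n v i) \<and> m \<le> p i n" using pi2[OF i] dd(1) Idx_le[OF i] by auto
    qed
    have e2: "\<exists>i\<in>Idx L n. p i n = m"
      using dd(2) pi2 by auto
    show "p \<in> dotp ((\<Pi>\<^sub>E i \<in> Idx L n. Stilde m (AA L n v i)) - (\<Pi>\<^sub>E i \<in> Idx L n. Stilde (m + 1) (AA L n v i)))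
            (Idx L n) (\<Pi>\<^sub>E i \<in> Idx1 L n. UNIV) (Idx1 L n)"
      by (rule dotp_iff[OF assms v, THEN iffD2]) (intro conjI ext2 b2 e2)
  qed
qed

end
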